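(* Let $M\in\mathrm{SL}(2,\mathbb{Z})$ and $n\in\mathbb{N}$. Then the reduction of $M$ mod $n$ is conjugate to its inverse within $\mathrm{GL}(2,\mathbb{Z}/n\mathbb{Z})$; hence the action of $M$ (mod $1$) on the lattice $L_n=\{x\in\mathbb{T}^2: nx\equiv0 \bmod 1\}$ of $n$-division points of the torus $\mathbb{T}^2=\mathbb{R}^2/\mathbb{Z}^2$ is reversible for all $n\in\mathbb{N}$. Moreover, if $\mathrm{mgcd}(M)=r\neq0$, then for every $n\in\mathbb{N}$ the reduction of $M$ mod $n$ possesses an involutory reversor, i.e. there is $R\in\mathrm{GL}(2,\mathbb{Z}/n\mathbb{Z})$ with $R^2=\mathbb{1}$ and $RMR^{-1}=M^{-1}$ over $\mathbb{Z}/n\mathbb{Z}$.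
   Context: For $M=\begin{pmatrix}a&b\\c&d\end{pmatrix}$, $\mathrm{mgcd}(M)=\gcd(b,c,d-a)$. An action is called reversible if it is conjugate to its inverse within the relevant group (here via an element of $\mathrm{GL}(2,\mathbb{Z}/n\mathbb{Z})$); a conjugating element is a reversor. *)

theory Defs
  imports "HOL-Analysis.Analysis" "HOL-Number_Theory.Number_Theory"
begin

text \<open>Integer 2x2 matrices are elements of int^2^2; entry (i,j) is A$i$j,
  so M = ((a,b),(c,d)) has a = M$1$1, b = M$1$2, c = M$2$1, d = M$2$2.
  Reduction mod n is modelled by entrywise congruence mod n.\<close>

definition mat_cong :: "nat \<Rightarrow> int^2^2 \<Rightarrow> int^2^2 \<Rightarrow> bool" where
  "mat_cong n A B \<longleftrightarrow> (\<forall>i j. [A$i$j = B$i$j] (mod int n))"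

definition gl_mod_pair :: "nat \<Rightarrow> int^2^2 \<Rightarrow> int^2^2 \<Rightarrow> bool" where
  "gl_mod_pair n R S \<longleftrightarrow> mat_cong n (R ** S) (mat 1) \<and> mat_cong n (S ** R) (mat 1)"

definition mgcd :: "int^2^2 \<Rightarrow> int" where
  "mgcd M = gcd (M$1$2) (gcd (M$2$1) (M$2$2 - M$1$1))"

text \<open>The lattice of n-division points of the torus R^2/Z^2, with points represented
  by their unique representatives in [0,1)^2.\<close>
definition torus_div_points :: "nat \<Rightarrow> (real^2) set" where
  "torus_div_points n = {x. \<forall>i. 0 \<le> x$i \<and> x$i < 1 \<and> real n * x$i \<in> \<int>}"

definition torus_act :: "int^2^2 \<Rightarrow> real^2 \<Rightarrow> real^2" where
  "torus_act A x = (\<chi> i. frac ((((\<chi> k l. real_of_int (A$k$l)) :: real^2^2) *v x) $ i))"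

end

theory Submission
  imports Defs
begin


lemma coprime_by_primes:
  fixes a b :: int assumes "b \<noteq> 0" "\<And>p. prime p \<Longrightarrow> p dvd a \<Longrightarrow> p dvd b \<Longrightarrow> False"
  shows "coprime a b"
proof (rule ccontr)
  assume "\<not> coprime a b"
  then have "\<not> is_unit (gcd a b)" using is_unit_gcd[of a b] by blast
  moreover have "gcd a b \<noteq> 0" using assms(1) by simp
  ultimately obtain p where "prime p" "p dvd gcd a b" using prime_divisorE by blast
  then show False using assms(2) by auto
qed

lemma prime_dvd_prod_primes:
  fixes S :: "int set" assumes "finite S" "\<forall>q\<in>S. prime q" "prime p"
  shows "p dvd \<Prod>S \<longleftrightarrow> p \<in> S"
proof
  assume "p dvd \<Prod>S"
  then obtain q where "q \<in> S" "p dvd q" using prime_dvd_prod_iff[OF assms(1) assms(3), of id] by auto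
  then show "p \<in> S" using primes_dvd_imp_eq assms by metis
next
  assume "p \<in> S" then show "p dvd \<Prod>S" using assms(1) dvd_prodI[of S p "\<lambda>x. x"] by simp
qed

lemma form_coprime:
  fixes \<alpha> \<beta> \<gamma> :: int and n :: nat
  assumes n: "n > 0" and g: "gcd \<alpha> (gcd \<beta> \<gamma>) = 1"
  shows "\<exists>X Y. coprime X Y \<and> coprime (\<alpha>*X^2 + \<beta>*X*Y + \<gamma>*Y^2) (int n)"
proof -
  define P where "P = {p::int. prime p \<and> p dvd int n}"
  have "P \<subseteq> {0..int n}"
  proof
    fix p assume "p \<in> P"
    then have "prime p" "p dvd int n" by (auto simp: P_def)
    then show "p \<in> {0..int n}" using n prime_gt_0_int[of p] zdvd_imp_le[of p "int n"] by auto
  qed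
  then have finP: "finite P" using finite_subset by blast
  define SX where "SX = {p\<in>P. p dvd \<alpha> \<and> \<not> p dvd \<gamma>}"
  define SY where "SY = {p\<in>P. \<not> p dvd \<alpha>}"
  define X where "X = \<Prod>SX"
  define Y where "Y = \<Prod>SY"
  have fX: "finite SX" "\<forall>q\<in>SX. prime q" using finite_subset[of SX P] finP by (auto simp: SX_def P_def)
  have fY: "finite SY" "\<forall>q\<in>SY. prime q" using finite_subset[of SY P] finP by (auto simp: SY_def P_def)
  have dX: "prime p \<Longrightarrow> p dvd X \<longleftrightarrow> p \<in> SX" for p
    using prime_dvd_prod_primes[OF fX] X_def by simp
  have dY: "prime p \<Longrightarrow> p dvd Y \<longleftrightarrow> p \<in> SY" for p
    using prime_dvd_prod_primes[OF fY] Y_def by simp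
  have "Y \<noteq> 0" unfolding Y_def using fY by (auto simp: prod_zero_iff)
  have cXY: "coprime X Y"
  proof (rule coprime_by_primes[OF \<open>Y \<noteq> 0\<close>])
    fix p :: int assume "prime p" "p dvd X" "p dvd Y"
    then show False using dX dY by (auto simp: SX_def SY_def)
  qed
  have cf: "coprime (\<alpha>*X^2 + \<beta>*X*Y + \<gamma>*Y^2) (int n)"
  proof (rule coprime_by_primes)
    show "int n \<noteq> 0" using n by simp
  next
    fix p :: int assume p: "prime p" and pf: "p dvd \<alpha>*X^2 + \<beta>*X*Y + \<gamma>*Y^2" and pn: "p dvd int n"
    have pP: "p \<in> P" using p pn by (simp add: P_def)
    show False
    proof (cases "p dvd \<alpha>")
      case False
      then have "p dvd Y" "\<not> p dvd X" using dX dY p pP by (auto simp: SX_def SY_def)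
      then have "p dvd \<beta>*X*Y + \<gamma>*Y^2" by (simp add: power2_eq_square)
      from dvd_diff[OF pf this] have "p dvd \<alpha>*X^2" by simp
      then show False using False \<open>\<not> p dvd X\<close> p by (simp add: prime_dvd_mult_iff prime_dvd_power_iff)
    next
      case True
      show False
      proof (cases "p dvd \<gamma>")
        case False
        then have "p dvd X" "\<not> p dvd Y" using True dX dY p pP by (auto simp: SX_def SY_def)
        then have "p dvd \<alpha>*X^2 + \<beta>*X*Y" by (simp add: power2_eq_square)
        from dvd_diff[OF pf this] have "p dvd \<gamma>*Y^2" by simp
        then show False using False \<open>\<not> p dvd Y\<close> p by (simp add: prime_dvd_mult_iff prime_dvd_power_iff)
      next
        case g2: True
        then have "\<not> p dvd X" "\<not> p dvd Y" using True dX dY p pP by (auto simp: SX_def SY_def)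
        have "p dvd \<alpha>*X^2 + \<gamma>*Y^2" using True g2 by simp
        from dvd_diff[OF pf this] have "p dvd \<beta>*X*Y" by simp
        then have "p dvd \<beta>" using \<open>\<not> p dvd X\<close> \<open>\<not> p dvd Y\<close> p by (simp add: prime_dvd_mult_iff)
        then have "p dvd gcd \<alpha> (gcd \<beta> \<gamma>)" using True g2 by simp
        then have "p dvd 1" using g by simp
        then show False using p not_prime_unit by blast
      qed
    qed
  qed
  show ?thesis using cXY cf by blast
qed



lemma reversor_exists:
  fixes a b c d :: int and n :: nat
  assumes det: "a * d - b * c = 1" and n: "n > 0"
  shows "\<exists>x y z k. x^2 + y * z = 1 \<and> x * (a-d) + y * c + z * b = int n * k"
proof (cases "gcd b (gcd c (d - a)) = 0")
  case True
  then have "b = 0" "c = 0" "d = a" by auto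
  then show ?thesis by (intro exI[of _ 1] exI[of _ 0]) simp
next
  case False
  define g where "g = gcd b (gcd c (d - a))"
  have gpos: "g > 0" using False g_def by (simp add: order.not_eq_order_implies_strict)
  have "g dvd b" "g dvd c" "g dvd (d - a)" unfolding g_def
    by (simp, meson dvd_trans gcd_dvd1 gcd_dvd2, meson dvd_trans gcd_dvd2)
  then obtain bb cc e where bb: "b = g * bb" and cc: "c = g * cc" and e: "d - a = g * e"
    by (meson dvdE)
  have "gcd (g * bb) (gcd (g * cc) (g * e)) = gcd b (gcd c (d - a))" by (simp only: bb cc e)
  then have "g = gcd (g * bb) (gcd (g * cc) (g * e))" using g_def by simp
  also have "\<dots> = g * gcd bb (gcd cc e)" using gpos by (simp add: gcd_mult_left)
  finally have g1: "gcd bb (gcd cc e) = 1" using gpos by simp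
  have "gcd bb (gcd (-e) (-cc)) = 1" using g1 by (simp add: gcd.commute)
  from form_coprime[OF n this] obtain sv q where
    sq: "coprime sv q" and wc: "coprime (bb * sv^2 + (- e) * sv * q + (- cc) * q^2) (int n)" by blast
  define w where "w = bb * sv^2 - e * sv * q - cc * q^2"
  have wcc: "coprime w (int n)" using wc by (simp add: w_def)
  obtain u v where uv: "u * sv + v * q = 1" using bezout_int[of sv q] sq by (auto simp: coprime_iff_gcd_eq_1)
  define p where "p = u"
  define r where "r = -v"
  have det1: "p * sv - q * r = 1" using uv by (simp add: p_def r_def algebra_simps)
  obtain uu vv where uvv: "uu * w + vv * int n = 1" using bezout_int[of w "int n"] wcc by (auto simp: coprime_iff_gcd_eq_1)
  define h where "h = 2 * r * sv * bb - (p * sv + q * r) * e - 2 * p * q * cc"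
  define z0 where "z0 = -h * uu"
  define x where "x = p * sv + q * r + q * sv * z0"
  define y where "y = -(2 * p * q + q^2 * z0)"
  define z where "z = 2 * r * sv + sv^2 * z0"
  have "x^2 + y * z = (p * sv - q * r)^2"
    unfolding x_def y_def z_def by (simp add: power2_eq_square algebra_simps)
  then have X1: "x^2 + y * z = 1" using det1 by simp
  have "x * (a-d) + y * c + z * b = g * (z0 * w + h)"
  proof -
    have "a - d = -(g * e)" using e by simp
    then have "x * (a-d) + y * c + z * b = g * (-x * e + y * cc + z * bb)" by (simp only: bb cc) (simp add: algebra_simps)
    also have "-x * e + y * cc + z * bb = z0 * w + h"
      unfolding x_def y_def z_def w_def h_def by (simp add: power2_eq_square algebra_simps)
    finally show ?thesis .
  qed
  also have "z0 * w + h = h * (1 - uu * w)" by (simp add: z0_def algebra_simps)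
  also have "1 - uu * w = vv * int n" using uvv by simp
  finally have "x * (a-d) + y * c + z * b = int n * (g * h * vv)" by (simp add: algebra_simps)
  then show ?thesis using X1 by blast
qed



lemma mmult2: "((A::'a::comm_ring_1^2^2) ** B)$i$j = A$i$1 * B$1$j + A$i$2 * B$2$j"
  by (simp add: matrix_matrix_mult_def sum_2)

lemma ta_comp: "(torus_act A x) $ i = frac (of_int (A$i$1) * x$1 + of_int (A$i$2) * x$2)"
  by (simp add: torus_act_def matrix_vector_mult_def sum_2)

lemma frac_shift: "A - B \<in> \<int> \<Longrightarrow> frac A = frac (B::real)"
  using frac_add_int_right[of "A - B" B] by (simp add: add.commute)

lemma torus_act_mult: "torus_act A (torus_act B x) = torus_act (A ** B) x"
proof -
  have "(torus_act A (torus_act B x)) $ i = (torus_act (A ** B) x) $ i" for i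
  proof -
    define m1 where "m1 = of_int (B$1$1) * x$1 + of_int (B$1$2) * x$2"
    define m2 where "m2 = of_int (B$2$1) * x$1 + of_int (B$2$2) * x$2"
    have "(torus_act A (torus_act B x)) $ i = frac (of_int (A$i$1) * frac m1 + of_int (A$i$2) * frac m2)"
      by (simp add: ta_comp m1_def m2_def)
    also have "\<dots> = frac (of_int ((A ** B)$i$1) * x$1 + of_int ((A ** B)$i$2) * x$2)"
    proof (rule frac_shift)
      have "of_int (A$i$1) * frac m1 + of_int (A$i$2) * frac m2 - (of_int ((A ** B)$i$1) * x$1 + of_int ((A ** B)$i$2) * x$2)
        = of_int (- A$i$1 * \<lfloor>m1\<rfloor> - A$i$2 * \<lfloor>m2\<rfloor>)"
        by (simp add: mmult2 frac_def m1_def m2_def algebra_simps)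
      then show "of_int (A$i$1) * frac m1 + of_int (A$i$2) * frac m2 - (of_int ((A ** B)$i$1) * x$1 + of_int ((A ** B)$i$2) * x$2) \<in> \<int>"
        by (metis Ints_of_int)
    qed
    also have "\<dots> = (torus_act (A ** B) x) $ i" by (simp add: ta_comp)
    finally show ?thesis .
  qed
  then show ?thesis by (simp add: vec_eq_iff)
qed

lemma torus_act_maps:
  assumes "x \<in> torus_div_points n" shows "torus_act A x \<in> torus_div_points n"
proof -
  have "real n * (torus_act A x) $ i \<in> \<int>" for i
  proof -
    define m where "m = of_int (A$i$1) * x$1 + of_int (A$i$2) * x$2"
    obtain k1 k2 where k: "real n * x$1 = of_int k1" "real n * x$2 = of_int k2"
    proof -
      have "real n * x$1 \<in> \<int>" "real n * x$2 \<in> \<int>" using assms unfolding torus_div_points_def by auto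
      then show ?thesis using that by (metis Ints_cases)
    qed
    have "real n * (torus_act A x) $ i = real n * m - real n * of_int \<lfloor>m\<rfloor>"
      by (simp add: ta_comp m_def frac_def algebra_simps)
    also have "real n * m = of_int (A$i$1) * (real n * x$1) + of_int (A$i$2) * (real n * x$2)"
      by (simp add: m_def algebra_simps)
    also have "\<dots> = of_int (A$i$1 * k1 + A$i$2 * k2)" using k by simp
    finally have "real n * (torus_act A x) $ i = of_int (A$i$1 * k1 + A$i$2 * k2 - int n * \<lfloor>m\<rfloor>)"
      by simp
    then show ?thesis by (metis Ints_of_int)
  qed
  moreover have "0 \<le> (torus_act A x) $ i \<and> (torus_act A x) $ i < 1" for i
    by (simp add: ta_comp frac_lt_1)
  ultimately show ?thesis unfolding torus_div_points_def by blast
qed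

lemma torus_act_id:
  assumes "x \<in> torus_div_points n" shows "torus_act (mat 1) x = x"
proof -
  have "(torus_act (mat 1) x) $ i = x $ i" for i
  proof -
    have "0 \<le> x$i" "x$i < 1" using assms unfolding torus_div_points_def by auto
    have "(torus_act (mat 1) x) $ i = frac (x $ i)"
      unfolding torus_act_def by (simp add: matrix_vector_mul_lid[unfolded mat_def] mat_def matrix_vector_mult_def sum_2 of_bool_def)
      (use exhaust_2[of i] in auto)
    then show ?thesis using \<open>0 \<le> x$i\<close> \<open>x$i < 1\<close> by (simp add: frac_eq)
  qed
  then show ?thesis by (simp add: vec_eq_iff)
qed

lemma torus_act_cong:
  fixes A B :: "int^2^2"
  assumes "\<forall>i j. A$i$j - B$i$j = (if i = j then t else 0)" "int n dvd t" "x \<in> torus_div_points n"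
  shows "torus_act A x = torus_act B x"
proof -
  obtain k where t: "t = int n * k" using assms(2) by blast
  have "(torus_act A x) $ i = (torus_act B x) $ i" for i
  proof -
    have "of_int (A$i$1) * x$1 + of_int (A$i$2) * x$2 - (of_int (B$i$1) * x$1 + of_int (B$i$2) * x$2)
       = of_int (A$i$1 - B$i$1) * x$1 + of_int (A$i$2 - B$i$2) * x$2" by (simp add: algebra_simps)
    also have "\<dots> = of_int t * x$i" using assms(1) exhaust_2[of i] by auto
    also have "\<dots> = of_int k * (real n * x$i)" using t by simp
    finally have eq: "of_int (A$i$1) * x$1 + of_int (A$i$2) * x$2 - (of_int (B$i$1) * x$1 + of_int (B$i$2) * x$2) = of_int k * (real n * x$i)" .
    have "real n * x$i \<in> \<int>" using assms(3) unfolding torus_div_points_def by blast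
    then have "of_int k * (real n * x$i) \<in> \<int>" by (simp add: Ints_mult)
    then show ?thesis unfolding ta_comp by (intro frac_shift) (simp only: eq)
  qed
  then show ?thesis by (simp add: vec_eq_iff)
qed



lemma mat2_eq: "(A::'a^2^2) = B \<longleftrightarrow> A$1$1 = B$1$1 \<and> A$1$2 = B$1$2 \<and> A$2$1 = B$2$1 \<and> A$2$2 = B$2$2"
  by (simp add: vec_eq_iff forall_2)

lemma mat1_2: "(mat 1 :: int^2^2)$1$1 = 1" "(mat 1 :: int^2^2)$1$2 = 0" "(mat 1 :: int^2^2)$2$1 = 0" "(mat 1 :: int^2^2)$2$2 = 1"
  by (simp_all add: mat_def)

lemma matrix_inv_2:
  fixes M :: "int^2^2"
  assumes "det M = 1"
  shows "matrix_inv M = vector [vector [M$2$2, - M$1$2], vector [- M$2$1, M$1$1]]"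
proof -
  define Mi where "Mi = (vector [vector [M$2$2, - M$1$2], vector [- M$2$1, M$1$1]] :: int^2^2)"
  have d: "M$1$1 * M$2$2 - M$1$2 * M$2$1 = 1" using assms by (simp add: det_2)
  have h1: "M ** Mi = mat 1" unfolding mat2_eq mmult2 mat1_2 Mi_def using d by (simp add: algebra_simps)
  have h2: "Mi ** M = mat 1" unfolding mat2_eq mmult2 mat1_2 Mi_def using d by (simp add: algebra_simps)
  have "M ** matrix_inv M = mat 1 \<and> matrix_inv M ** M = mat 1"
    unfolding matrix_inv_def by (rule someI[of _ Mi]) (use h1 h2 in blast)
  then have "matrix_inv M = (Mi ** M) ** matrix_inv M" using h2 by (simp add: matrix_mul_lid)
  also have "\<dots> = Mi ** (M ** matrix_inv M)" by (simp add: matrix_mul_assoc)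
  also have "\<dots> = Mi" using \<open>_ \<and> _\<close> by (simp add: matrix_mul_rid)
  finally show ?thesis unfolding Mi_def .
qed

theorem theorem4p2:
  fixes M :: "int^2^2" and n :: nat
  assumes SL: "det M = 1" and n_pos: "n > 0"
  shows "(\<exists>R S. gl_mod_pair n R S \<and> mat_cong n (R ** M ** S) (matrix_inv M))
       \<and> (\<exists>R S. gl_mod_pair n R S
            \<and> bij_betw (torus_act R) (torus_div_points n) (torus_div_points n)
            \<and> (\<forall>x\<in>torus_div_points n.
                 torus_act R (torus_act M x) = torus_act (matrix_inv M) (torus_act R x)))
       \<and> (mgcd M \<noteq> 0 \<longrightarrow>
            (\<exists>R S. gl_mod_pair n R S \<and> mat_cong n (R ** R) (mat 1)
                   \<and> mat_cong n (R ** M ** S) (matrix_inv M)))"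
proof -
  define a where "a = M$1$1"
  define b where "b = M$1$2"
  define c where "c = M$2$1"
  define d where "d = M$2$2"
  have dt: "a * d - b * c = 1" using SL by (simp add: det_2 a_def b_def c_def d_def)
  obtain xr yr zr k where X1: "xr^2 + yr * zr = 1" and tk: "xr * (a-d) + yr * c + zr * b = int n * k"
    using reversor_exists[OF dt n_pos] by blast
  define t where "t = xr * (a-d) + yr * c + zr * b"
  define R where "R = (vector [vector [xr, yr], vector [zr, - xr]] :: int^2^2)"
  define Mi where "Mi = (vector [vector [d, - b], vector [- c, a]] :: int^2^2)"
  have MiE: "matrix_inv M = Mi" unfolding Mi_def a_def b_def c_def d_def by (rule matrix_inv_2[OF SL])
  have Mabcd: "M$1$1 = a" "M$1$2 = b" "M$2$1 = c" "M$2$2 = d" by (simp_all add: a_def b_def c_def d_def)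
  have X1': "xr * xr + yr * zr = 1" using X1 by (simp add: power2_eq_square)
  have RR: "R ** R = mat 1" unfolding mat2_eq mmult2 mat1_2 R_def using X1' by (simp add: algebra_simps)
  have gl: "gl_mod_pair n R R" unfolding gl_mod_pair_def mat_cong_def RR by simp
  have ndvd: "int n dvd t" using tk t_def by simp
  have RMR: "\<forall>i j. (R ** M ** R)$i$j - Mi$i$j = t * R$i$j"
    unfolding forall_2 mmult2 Mabcd unfolding R_def Mi_def t_def using X1'
    by (simp add: algebra_simps) (simp add: distrib_left[symmetric])
  have cong1: "mat_cong n (R ** M ** R) (matrix_inv M)"
    unfolding mat_cong_def MiE
  proof (intro allI)
    fix i j show "[(R ** M ** R)$i$j = Mi$i$j] (mod int n)"
      using RMR ndvd by (simp add: cong_iff_dvd_diff)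
  qed
  have comm: "\<forall>i j. (R ** M)$i$j - (Mi ** R)$i$j = (if i = j then t else 0)"
    unfolding forall_2 mmult2 Mabcd unfolding R_def Mi_def t_def
    by (simp add: algebra_simps)
  have tor: "\<forall>x\<in>torus_div_points n. torus_act R (torus_act M x) = torus_act (matrix_inv M) (torus_act R x)"
    unfolding MiE torus_act_mult using torus_act_cong[OF comm ndvd] by blast
  have inv: "\<forall>x\<in>torus_div_points n. torus_act R (torus_act R x) = x"
    unfolding torus_act_mult RR using torus_act_id by blast
  have bij: "bij_betw (torus_act R) (torus_div_points n) (torus_div_points n)"
    by (rule bij_betw_byWitness[where f' = "torus_act R"]) (use inv torus_act_maps in auto)
  have RRc: "mat_cong n (R ** R) (mat 1)" unfolding mat_cong_def RR by simp
  show ?thesis using gl cong1 bij tor RRc by blast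
qed


end
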